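(* Let $\mathcal{H}_C$ be a finite-dimensional complex Hilbert space, let $\Pi_1,\dots,\Pi_m$ be mutually orthogonal orthogonal projections on $\mathcal{H}_C$ with $\sum_j\Pi_j=I$, and for each $k\in\mathbb{R}$ let $U_k$ be a unitary operator on $\mathcal{H}_C$. For $0\le p\le1$, $q=1-p$, define the linear map on $L(\mathcal{H}_C)$ $$\mathcal{L}_{k,k',p}(\rho)=qU_k\rho U_{k'}^*+p\sum_{j=1}^m\Pi_jU_k\rho(\Pi_jU_{k'})^*.$$ Say that a linear map satisfies the eigenvalue condition if $1$ is an eigenvalue of it of algebraic multiplicity $1$ and all its other eigenvalues have absolute value strictly less than $1$. If $\mathcal{L}_{k,k,1}$ satisfies the eigenvalue condition, then $\mathcal{L}_{k,k,p}$ satisfies the eigenvalue condition for every $0<p\le1$.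
   Context: $L(\mathcal{H}_C)$ denotes the space of linear operators on $\mathcal{H}_C$ (with the Hilbert–Schmidt inner product). The case $p=0$ corresponds to the coherent (unitary) quantum random walk and $p=1$ to the fully decoherent (open) quantum random walk. *)

theory Defs
  imports "Jordan_Normal_Form.Jordan_Normal_Form" "HOL-Computational_Algebra.Polynomial"
begin

definition adj :: "complex mat \<Rightarrow> complex mat" where
  "adj A = mat (dim_col A) (dim_row A) (\<lambda>(i,j). cnj (A $$ (j,i)))"

definition unitary_op :: "nat \<Rightarrow> complex mat \<Rightarrow> bool" where
  "unitary_op n U \<longleftrightarrow> U \<in> carrier_mat n n \<and> U * adj U = 1\<^sub>m n \<and> adj U * U = 1\<^sub>m n"

fun msum :: "nat \<Rightarrow> (nat \<Rightarrow> complex mat) \<Rightarrow> nat \<Rightarrow> complex mat" where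
  "msum n f 0 = 0\<^sub>m n n"
| "msum n f (Suc m) = msum n f m + f m"

definition proj_resolution :: "nat \<Rightarrow> nat \<Rightarrow> (nat \<Rightarrow> complex mat) \<Rightarrow> bool" where
  "proj_resolution n m P \<longleftrightarrow>
     (\<forall>j<m. P j \<in> carrier_mat n n \<and> adj (P j) = P j \<and> P j * P j = P j) \<and>
     (\<forall>i<m. \<forall>j<m. i \<noteq> j \<longrightarrow> P i * P j = 0\<^sub>m n n) \<and>
     msum n P m = 1\<^sub>m n"

definition Lmap :: "nat \<Rightarrow> nat \<Rightarrow> (nat \<Rightarrow> complex mat) \<Rightarrow> (real \<Rightarrow> complex mat)
                    \<Rightarrow> real \<Rightarrow> real \<Rightarrow> real \<Rightarrow> complex mat \<Rightarrow> complex mat" where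
  "Lmap n m P U k k' p \<rho> =
     complex_of_real (1 - p) \<cdot>\<^sub>m (U k * \<rho> * adj (U k')) +
     complex_of_real p \<cdot>\<^sub>m msum n (\<lambda>j. P j * U k * \<rho> * adj (P j * U k')) m"

definition mat_unit :: "nat \<Rightarrow> nat \<Rightarrow> nat \<Rightarrow> complex mat" where
  "mat_unit n a b = mat n n (\<lambda>(i,j). if i = a \<and> j = b then 1 else 0)"

(* matrix of a linear map f on L(C^n) w.r.t. the basis of matrix units,
   with E_{ab} numbered a*n+b *)
definition op_matrix :: "nat \<Rightarrow> (complex mat \<Rightarrow> complex mat) \<Rightarrow> complex mat" where
  "op_matrix n f = mat (n*n) (n*n)
     (\<lambda>(r,c). f (mat_unit n (c div n) (c mod n)) $$ (r div n, r mod n))"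

definition eigenvalue_condition :: "complex mat \<Rightarrow> bool" where
  "eigenvalue_condition M \<longleftrightarrow>
     eigenvalue M 1 \<and> order 1 (char_poly M) = 1 \<and>
     (\<forall>e. eigenvalue M e \<and> e \<noteq> 1 \<longrightarrow> cmod e < 1)"

end

theory Submission
  imports Defs "Jordan_Normal_Form.Jordan_Normal_Form_Uniqueness" "Jordan_Normal_Form.Jordan_Normal_Form_Existence"
begin

lemma sum_list_min1: "sum_list (L::nat list) = 1 \<Longrightarrow> sum_list (map (min 1) L) = 1"
proof (induction L)
  case (Cons a L)
  then show ?case
    by (cases a) (auto simp: sum_list_eq_0_iff)
qed simp

lemma sum_list_min2: "sum_list (map (min 2) (L::nat list)) = sum_list (map (min 1) L) \<Longrightarrow> sum_list L = sum_list (map (min 1) L)"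
proof (induction L)
  case (Cons a L)
  have "sum_list (map (min 1) L) \<le> sum_list (map (min 2) L)"
    by (induction L) auto
  moreover have "min 1 a \<le> min 2 a" by simp
  ultimately have "min 2 a = min 1 a" "sum_list (map (min 2) L) = sum_list (map (min 1) L)" using Cons.prems by auto
  with Cons.IH show ?case by auto
qed simp

lemma jnf_ex: fixes A :: "complex mat" assumes "A \<in> carrier_mat K K" shows "\<exists>n_as. jordan_nf A n_as"
  using char_poly_factorized[OF assms] jordan_nf_exists[OF assms] by blast

lemma filter_case: "[(n, e)\<leftarrow>n_as . e = ev] = filter (\<lambda>na. snd na = ev) n_as"
  by (induction n_as) auto

lemma kernel_pow1: "C \<in> carrier_mat K K \<Longrightarrow> mat_kernel (C ^\<^sub>m 1) = mat_kernel C"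
  by simp

lemma order_one_crit:
  fixes M N :: "complex mat"
  assumes M: "M \<in> carrier_mat K K" and N: "N \<in> carrier_mat K K"
  and ker: "mat_kernel (char_matrix M 1) = mat_kernel (char_matrix N 1)"
  and ordN: "Polynomial.order 1 (char_poly N) = 1"
  and ss: "\<forall>v \<in> carrier_vec K. char_matrix M 1 *\<^sub>v (char_matrix M 1 *\<^sub>v v) = 0\<^sub>v K \<longrightarrow> char_matrix M 1 *\<^sub>v v = 0\<^sub>v K"
  shows "Polynomial.order 1 (char_poly M) = 1"
proof -
  obtain n_as where jn: "jordan_nf N n_as" using jnf_ex[OF N] by blast
  obtain m_as where jm: "jordan_nf M m_as" using jnf_ex[OF M] by blast
  define LN where "LN = map fst (filter (\<lambda>na. snd na = 1) n_as)"
  define LM where "LM = map fst (filter (\<lambda>na. snd na = 1) m_as)"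
  have oN: "sum_list LN = 1" using jordan_nf_order[OF jn, of 1] ordN LN_def by simp
  have dN: "dim_gen_eigenspace N 1 1 = 1"
    using dim_gen_eigenspace[OF jn, of 1 1] sum_list_min1[OF oN]
    unfolding filter_case LN_def by simp
  have dM1: "dim_gen_eigenspace M 1 1 = sum_list (map (min 1) LM)"
    using dim_gen_eigenspace[OF jm, of 1 1] unfolding filter_case LM_def by simp
  have dM2: "dim_gen_eigenspace M 1 2 = sum_list (map (min 2) LM)"
    using dim_gen_eigenspace[OF jm, of 1 2] unfolding filter_case LM_def by simp
  define C where "C = char_matrix M 1"
  have C: "C \<in> carrier_mat K K" using M C_def by simp
  have CN: "char_matrix N 1 \<in> carrier_mat K K" using N by simp
  have e1: "dim_gen_eigenspace M 1 1 = dim_gen_eigenspace N 1 1"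
    unfolding dim_gen_eigenspace_def kernel_dim_def using C CN ker C_def by simp
  have k2: "mat_kernel (C ^\<^sub>m 2) = mat_kernel C"
  proof -
    have p2: "C ^\<^sub>m 2 = C * C" using C by (simp add: numeral_2_eq_2)
    have CC: "C * C \<in> carrier_mat K K" using C by simp
    show ?thesis unfolding p2 mat_kernel[OF CC] mat_kernel[OF C]
      using ss C C_def by auto
  qed
  have e2: "dim_gen_eigenspace M 1 2 = dim_gen_eigenspace M 1 1"
    unfolding dim_gen_eigenspace_def kernel_dim_def using C k2 C_def[symmetric] by simp
  have "sum_list LM = 1"
    using sum_list_min2[of LM] dM1 dM2 e1 e2 dN by simp
  then show ?thesis using jordan_nf_order[OF jm, of 1] LM_def by simp
qed


definition vn :: "nat \<Rightarrow> complex vec \<Rightarrow> real" where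
  "vn K v = (\<Sum>i<K. (cmod (v $ i))^2)"

lemma cmod_add_sq: "(cmod (a + of_real t * b))^2 = (cmod a)^2 + 2 * t * Re (a * cnj b) + t^2 * (cmod b)^2"
  unfolding cmod_power2 by (simp add: power2_eq_square algebra_simps)

lemma vn_expand: assumes "v \<in> carrier_vec K" "w \<in> carrier_vec K"
  shows "vn K (v + complex_of_real t \<cdot>\<^sub>v w) = vn K v + 2 * t * (\<Sum>i<K. Re (v$i * cnj (w$i))) + t^2 * vn K w"
proof -
  have "vn K (v + complex_of_real t \<cdot>\<^sub>v w) = (\<Sum>i<K. (cmod (v$i))^2 + 2*t*Re(v$i*cnj(w$i)) + t^2*(cmod (w$i))^2)"
    unfolding vn_def using assms by (intro sum.cong) (simp_all only: cmod_add_sq index_add_vec index_smult_vec carrier_vecD lessThan_iff)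
  also have "\<dots> = vn K v + 2 * t * (\<Sum>i<K. Re (v$i * cnj (w$i))) + t^2 * vn K w"
    by (simp only: sum.distrib vn_def sum_distrib_left)
  finally show ?thesis .
qed

lemma vn_nonneg: "vn K v \<ge> 0" unfolding vn_def by (simp add: sum_nonneg)

lemma vn_zero: assumes "v \<in> carrier_vec K" "vn K v = 0" shows "v = 0\<^sub>v K"
proof -
  have "\<forall>i\<in>{..<K}. (cmod (v$i))^2 = 0"
    using assms(2) unfolding vn_def by (subst sum_nonneg_eq_0_iff[symmetric]) auto
  then show ?thesis using assms(1) by (intro eq_vecI) auto
qed

lemma vn_smult: "vn K (c \<cdot>\<^sub>v v) = (cmod c)^2 * vn K v" if "v \<in> carrier_vec K"
  using that unfolding vn_def by (simp add: norm_mult power_mult_distrib sum_distrib_left)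

lemma contr_fix:
  fixes M :: "complex mat"
  assumes M: "M \<in> carrier_mat K K"
    and contr: "\<forall>u\<in>carrier_vec K. vn K (M *\<^sub>v u) \<le> vn K u"
    and v: "v \<in> carrier_vec K" and w: "w \<in> carrier_vec K"
    and Mw: "M *\<^sub>v w = w" and Mv: "M *\<^sub>v v = v + w"
  shows "w = 0\<^sub>v K"
proof -
  define R where "R = (\<Sum>i<K. Re (v$i * cnj (w$i)))"
  define N where "N = vn K w"
  have key: "2 * R + (2*s+1) * N \<le> 0" for s :: real
  proof -
    have u: "v + complex_of_real s \<cdot>\<^sub>v w \<in> carrier_vec K" using v w by simp
    have "M *\<^sub>v (v + complex_of_real s \<cdot>\<^sub>v w) = M *\<^sub>v v + complex_of_real s \<cdot>\<^sub>v (M *\<^sub>v w)"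
      using M v w by (simp add: mult_add_distrib_mat_vec mult_mat_vec)
    also have "\<dots> = v + complex_of_real (s+1) \<cdot>\<^sub>v w"
      using Mv Mw v w by (intro eq_vecI) (auto simp: algebra_simps)
    finally have "vn K (v + complex_of_real (s+1) \<cdot>\<^sub>v w) \<le> vn K (v + complex_of_real s \<cdot>\<^sub>v w)"
      using contr u by metis
    then have "2 * (s+1) * R + (s+1)^2 * N \<le> 2 * s * R + s^2 * N"
      unfolding vn_expand[OF v w] R_def N_def by simp
    then show ?thesis by (simp add: power2_eq_square algebra_simps)
  qed
  have N0: "N \<ge> 0" unfolding N_def by (rule vn_nonneg)
  have "N = 0"
  proof (rule ccontr)
    assume "N \<noteq> 0"
    then have Np: "N > 0" using N0 by simp
    define s where "s = (abs R + 1) / N"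
    have "(2*s+1) * N = 2 * (abs R + 1) + N" using Np unfolding s_def by (simp add: field_simps)
    then have "2 * R + (2*s+1) * N = 2*R + 2*(abs R + 1) + N" by simp
    moreover have "0 < 2*R + 2*(abs R + 1) + N" using Np by (cases "R \<ge> 0") auto
    ultimately have "2 * R + (2*s+1) * N > 0" by simp
    with key[of s] show False by simp
  qed
  then show ?thesis using vn_zero[OF w] N_def by simp
qed

lemma contr_eig:
  fixes M :: "complex mat"
  assumes M: "M \<in> carrier_mat K K"
    and contr: "\<forall>u\<in>carrier_vec K. vn K (M *\<^sub>v u) \<le> vn K u"
    and ev: "eigenvector M v e"
  shows "cmod e \<le> 1"
proof -
  have v: "v \<in> carrier_vec K" "v \<noteq> 0\<^sub>v K" "M *\<^sub>v v = e \<cdot>\<^sub>v v" using ev M unfolding eigenvector_def by auto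
  have pos: "vn K v > 0" using vn_zero[OF v(1)] vn_nonneg[of K v] v(2) by fastforce
  have "(cmod e)^2 * vn K v \<le> vn K v" using contr v vn_smult[OF v(1), of e] by metis
  then have "(cmod e)^2 \<le> 1" using pos by simp
  then show ?thesis by (simp add: power_le_one_iff abs_le_square_iff)
qed


lemma adj_carrier[simp]: "A \<in> carrier_mat n n \<Longrightarrow> adj A \<in> carrier_mat n n"
  unfolding adj_def by auto
lemma adj_dims[simp]: "dim_row (adj A) = dim_col A" "dim_col (adj A) = dim_row A"
  unfolding adj_def by auto
lemma adj_index[simp]: "i < dim_col A \<Longrightarrow> j < dim_row A \<Longrightarrow> adj A $$ (i,j) = cnj (A $$ (j,i))"
  unfolding adj_def by auto
lemma adj_adj[simp]: "adj (adj A) = A"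
  by (rule eq_matI) auto
lemma adj_mult: assumes "A \<in> carrier_mat n n" "B \<in> carrier_mat n n"
  shows "adj (A * B) = adj B * adj A"
  using assms by (intro eq_matI) (auto simp: scalar_prod_def row_def col_def atLeast0LessThan mult.commute)

lemma msum_carrier[simp]: "(\<And>l. l < m \<Longrightarrow> f l \<in> carrier_mat n n) \<Longrightarrow> msum n f m \<in> carrier_mat n n"
  by (induction m) auto

lemma msum_index: "(\<And>l. l < m \<Longrightarrow> f l \<in> carrier_mat n n) \<Longrightarrow> i < n \<Longrightarrow> j < n \<Longrightarrow>
   msum n f m $$ (i,j) = (\<Sum>l<m. f l $$ (i,j))"
proof (induction m)
  case (Suc m)
  have c: "msum n f m \<in> carrier_mat n n" using Suc.prems by auto
  have fm: "f m \<in> carrier_mat n n" using Suc.prems by simp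
  have "msum n f m $$ (i,j) = (\<Sum>l<m. f l $$ (i,j))" using Suc by auto
  moreover have "(msum n f m + f m) $$ (i,j) = msum n f m $$ (i,j) + f m $$ (i,j)"
    using fm Suc.prems(2,3) by simp
  ultimately show ?case by simp
qed auto

lemma msum_cong: "(\<And>l. l < m \<Longrightarrow> f l = g l) \<Longrightarrow> msum n f m = msum n g m"
  by (induction m) auto

lemma msum_mult_left: assumes "A \<in> carrier_mat n n" "\<And>l. l < m \<Longrightarrow> f l \<in> carrier_mat n n"
  shows "A * msum n f m = msum n (\<lambda>l. A * f l) m"
  using assms
proof (induction m)
  case 0 then show ?case by auto
next
  case (Suc m)
  have c: "msum n f m \<in> carrier_mat n n" using Suc.prems by auto
  have "A * (msum n f m + f m) = A * msum n f m + A * f m"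
    by (rule mult_add_distrib_mat[OF Suc.prems(1) c]) (use Suc.prems in auto)
  then show ?case using Suc by auto
qed

lemma msum_mult_right: assumes "A \<in> carrier_mat n n" "\<And>l. l < m \<Longrightarrow> f l \<in> carrier_mat n n"
  shows "msum n f m * A = msum n (\<lambda>l. f l * A) m"
  using assms
proof (induction m)
  case 0 then show ?case by auto
next
  case (Suc m)
  have c: "msum n f m \<in> carrier_mat n n" using Suc.prems by auto
  have "(msum n f m + f m) * A = msum n f m * A + f m * A"
    by (rule add_mult_distrib_mat[OF c]) (use Suc.prems in auto)
  then show ?case using Suc by auto
qed

lemma msum_zero: "(\<And>l. l < m \<Longrightarrow> f l = 0\<^sub>m n n) \<Longrightarrow> msum n f m = 0\<^sub>m n n"
  by (induction m) auto

lemma sum3_swap: "(\<Sum>i\<in>A. \<Sum>j\<in>B. \<Sum>a\<in>C. g i j a) = (\<Sum>a\<in>C. \<Sum>j\<in>B. \<Sum>i\<in>A. (g i j a :: 'a::comm_monoid_add))"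
proof -
  have "(\<Sum>i\<in>A. \<Sum>j\<in>B. \<Sum>a\<in>C. g i j a) = (\<Sum>i\<in>A. \<Sum>a\<in>C. \<Sum>j\<in>B. g i j a)"
    by (rule sum.cong[OF refl], rule sum.swap)
  also have "\<dots> = (\<Sum>a\<in>C. \<Sum>i\<in>A. \<Sum>j\<in>B. g i j a)" by (rule sum.swap)
  also have "\<dots> = (\<Sum>a\<in>C. \<Sum>j\<in>B. \<Sum>i\<in>A. g i j a)"
    by (rule sum.cong[OF refl], rule sum.swap)
  finally show ?thesis .
qed

lemma msum_single: assumes "j < m" "\<And>l. l < m \<Longrightarrow> l \<noteq> j \<Longrightarrow> f l = 0\<^sub>m n n" "f j \<in> carrier_mat n n"
  shows "msum n f m = f j"
  using assms
proof (induction m)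
  case 0 then show ?case by auto
next
  case (Suc m)
  show ?case
  proof (cases "j = m")
    case True
    have "msum n f m = 0\<^sub>m n n"
      using Suc.prems True by (intro msum_zero) auto
    then show ?thesis using True Suc.prems by auto
  next
    case False
    then have "msum n f m = f j" using Suc by auto
    then show ?thesis using Suc.prems False by auto
  qed
qed

definition ip :: "nat \<Rightarrow> complex mat \<Rightarrow> complex mat \<Rightarrow> complex" where
  "ip n X Y = (\<Sum>i<n. \<Sum>j<n. X $$ (i,j) * cnj (Y $$ (i,j)))"

definition hs :: "nat \<Rightarrow> complex mat \<Rightarrow> real" where
  "hs n X = (\<Sum>i<n. \<Sum>j<n. (cmod (X $$ (i,j)))^2)"

lemma ip_hs: "ip n X X = complex_of_real (hs n X)"
  unfolding ip_def hs_def by (simp only: of_real_sum complex_norm_square)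

lemma ip_left_mult: assumes "A \<in> carrier_mat n n" "X \<in> carrier_mat n n" "Y \<in> carrier_mat n n"
  shows "ip n (A * X) Y = ip n X (adj A * Y)"
proof -
  have "ip n (A * X) Y = (\<Sum>i<n. \<Sum>j<n. \<Sum>a<n. A $$ (i,a) * X $$ (a,j) * cnj (Y $$ (i,j)))"
    unfolding ip_def using assms by (simp add: scalar_prod_def row_def col_def atLeast0LessThan sum_distrib_right)
  also have "\<dots> = (\<Sum>a<n. \<Sum>j<n. \<Sum>i<n. A $$ (i,a) * X $$ (a,j) * cnj (Y $$ (i,j)))"
    by (rule sum3_swap)
  also have "\<dots> = ip n X (adj A * Y)"
    unfolding ip_def using assms by (simp add: scalar_prod_def row_def col_def atLeast0LessThan sum_distrib_left mult.commute mult.left_commute)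
  finally show ?thesis .
qed

lemma ip_right_mult: assumes "B \<in> carrier_mat n n" "X \<in> carrier_mat n n" "Y \<in> carrier_mat n n"
  shows "ip n (X * B) Y = ip n X (Y * adj B)"
proof -
  have "ip n (X * B) Y = (\<Sum>i<n. \<Sum>j<n. \<Sum>a<n. X $$ (i,a) * B $$ (a,j) * cnj (Y $$ (i,j)))"
    unfolding ip_def using assms by (simp add: scalar_prod_def row_def col_def atLeast0LessThan sum_distrib_right)
  also have "\<dots> = (\<Sum>i<n. \<Sum>a<n. \<Sum>j<n. X $$ (i,a) * B $$ (a,j) * cnj (Y $$ (i,j)))"
    by (subst sum.swap) simp
  also have "\<dots> = ip n X (Y * adj B)"
    unfolding ip_def using assms by (simp add: scalar_prod_def row_def col_def atLeast0LessThan sum_distrib_left mult.commute mult.left_commute)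
  finally show ?thesis .
qed


lemma assoc_sq: "A \<in> carrier_mat n n \<Longrightarrow> B \<in> carrier_mat n n \<Longrightarrow> C \<in> carrier_mat n n \<Longrightarrow> A * B * C = A * (B * C)"
  by (rule assoc_mult_mat)

lemma ip_add_left: "A \<in> carrier_mat n n \<Longrightarrow> B \<in> carrier_mat n n \<Longrightarrow> ip n (A + B) Z = ip n A Z + ip n B Z"
  unfolding ip_def by (simp add: sum.distrib distrib_right)
lemma ip_add_right: "A \<in> carrier_mat n n \<Longrightarrow> B \<in> carrier_mat n n \<Longrightarrow> ip n Z (A + B) = ip n Z A + ip n Z B"
  unfolding ip_def by (simp add: sum.distrib distrib_left)
lemma ip_minus_right: "A \<in> carrier_mat n n \<Longrightarrow> B \<in> carrier_mat n n \<Longrightarrow> ip n Z (A - B) = ip n Z A - ip n Z B"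
  unfolding ip_def by (simp add: sum_subtractf right_diff_distrib)

lemma ip_msum_left: "(\<And>l. l < m \<Longrightarrow> f l \<in> carrier_mat n n) \<Longrightarrow> ip n (msum n f m) Z = (\<Sum>l<m. ip n (f l) Z)"
proof (induction m)
  case 0 then show ?case unfolding ip_def by simp
next
  case (Suc m)
  have c: "msum n f m \<in> carrier_mat n n" "f m \<in> carrier_mat n n" using Suc.prems by auto
  show ?case using Suc ip_add_left[OF c] by simp
qed

lemma ip_msum_right: "(\<And>l. l < m \<Longrightarrow> f l \<in> carrier_mat n n) \<Longrightarrow> ip n Z (msum n f m) = (\<Sum>l<m. ip n Z (f l))"
proof (induction m)
  case 0 then show ?case unfolding ip_def by simp
next
  case (Suc m)
  have c: "msum n f m \<in> carrier_mat n n" "f m \<in> carrier_mat n n" using Suc.prems by auto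
  show ?case using Suc ip_add_right[OF c] by simp
qed

lemma hs_zero: assumes "X \<in> carrier_mat n n" "hs n X = 0" shows "X = 0\<^sub>m n n"
proof -
  have "\<forall>i\<in>{..<n}. (\<Sum>j<n. (cmod (X $$ (i,j)))^2) = 0"
    using assms(2) unfolding hs_def by (subst sum_nonneg_eq_0_iff[symmetric]) (auto intro: sum_nonneg)
  then have "\<forall>i\<in>{..<n}. \<forall>j\<in>{..<n}. (cmod (X $$ (i,j)))^2 = 0"
    by (subst (asm) sum_nonneg_eq_0_iff) auto
  then show ?thesis using assms(1) by (intro eq_matI) auto
qed

lemma hs_nonneg: "hs n X \<ge> 0" unfolding hs_def by (intro sum_nonneg) auto

lemma cmod_add_sq_c: "(cmod (a + c * b))^2 = (cmod a)^2 + (cmod c)^2 * (cmod b)^2 + 2 * Re (cnj c * (a * cnj b))"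
  unfolding cmod_power2 by (simp add: power2_eq_square algebra_simps)

lemma hs_pyth: assumes W: "W \<in> carrier_mat n n" and Z: "Z \<in> carrier_mat n n" and o: "ip n W Z = 0"
  shows "hs n (W + c \<cdot>\<^sub>m Z) = hs n W + (cmod c)^2 * hs n Z"
proof -
  have "hs n (W + c \<cdot>\<^sub>m Z) = (\<Sum>i<n. \<Sum>j<n. (cmod (W $$ (i,j)))^2 + (cmod c)^2 * (cmod (Z $$ (i,j)))^2
     + 2 * Re (cnj c * (W $$ (i,j) * cnj (Z $$ (i,j)))))"
    unfolding hs_def using W Z by (intro sum.cong refl) (simp add: cmod_add_sq_c)
  also have "\<dots> = hs n W + (cmod c)^2 * hs n Z + 2 * Re (cnj c * ip n W Z)"
    unfolding hs_def ip_def by (simp add: sum.distrib sum_distrib_left Re_sum)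
  finally show ?thesis using o by simp
qed

lemma hs_unitary: assumes V: "V \<in> carrier_mat n n" and u: "adj V * V = 1\<^sub>m n" and X: "X \<in> carrier_mat n n"
  shows "hs n (V * X * adj V) = hs n X"
proof -
  have aV: "adj V \<in> carrier_mat n n" using V by simp
  have e1: "V * X * adj V = V * (X * adj V)" by (rule assoc_mult_mat[OF V X aV])
  have e2: "adj V * (V * (X * adj V)) = X * adj V"
  proof -
    have "(adj V * V) * (X * adj V) = adj V * (V * (X * adj V))"
      by (rule assoc_sq[OF aV V]) (use X aV in simp)
    then show ?thesis using u X aV by simp
  qed
  have e3': "X * adj V * V = X * (adj V * V)" by (rule assoc_mult_mat[OF X aV V])
  have e3: "X * adj V * V = X" using e3' u X by simp
  have "complex_of_real (hs n (V * X * adj V)) = ip n (V * (X * adj V)) (V * (X * adj V))"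
    unfolding ip_hs e1 ..
  also have "\<dots> = ip n (X * adj V) (X * adj V)"
    using ip_left_mult[of V n "X * adj V" "V * (X * adj V)"] e2 V X aV by simp
  also have "\<dots> = ip n X X"
    using ip_right_mult[of "adj V" n X "X * adj V"] e3 X aV by simp
  also have "\<dots> = complex_of_real (hs n X)" by (rule ip_hs)
  finally show ?thesis by simp
qed


lemma mult_sq_carrier: "A \<in> carrier_mat n n \<Longrightarrow> B \<in> carrier_mat n n \<Longrightarrow> A * B \<in> carrier_mat n n"
  by simp

lemma assoc4: assumes "A \<in> carrier_mat n n" "B \<in> carrier_mat n n" "C \<in> carrier_mat n n" "D \<in> carrier_mat n n"
  shows "A * (B * C * D) = A * B * C * D"
proof -
  have "A * (B * C * D) = A * (B * C) * D" using assms by (simp add: assoc_sq[of A n "B*C" D])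
  also have "\<dots> = A * B * C * D" using assms by (simp add: assoc_sq[of A n B C])
  finally show ?thesis .
qed

definition Dm :: "nat \<Rightarrow> nat \<Rightarrow> (nat \<Rightarrow> complex mat) \<Rightarrow> complex mat \<Rightarrow> complex mat" where
  "Dm n m P Y = msum n (\<lambda>j. P j * Y * P j) m"

locale pres =
  fixes n m :: nat and P :: "nat \<Rightarrow> complex mat"
  assumes pr: "proj_resolution n m P"
begin

lemma Pc: "j < m \<Longrightarrow> P j \<in> carrier_mat n n" using pr unfolding proj_resolution_def by auto
lemma Pa: "j < m \<Longrightarrow> adj (P j) = P j" using pr unfolding proj_resolution_def by auto
lemma Pi: "j < m \<Longrightarrow> P j * P j = P j" using pr unfolding proj_resolution_def by auto
lemma Po: "i < m \<Longrightarrow> j < m \<Longrightarrow> i \<noteq> j \<Longrightarrow> P i * P j = 0\<^sub>m n n" using pr unfolding proj_resolution_def by auto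

lemma PYP_carrier: "l < m \<Longrightarrow> Y \<in> carrier_mat n n \<Longrightarrow> P l * Y * P l \<in> carrier_mat n n"
  by (intro mult_sq_carrier Pc)

lemma D_carrier: "Y \<in> carrier_mat n n \<Longrightarrow> Dm n m P Y \<in> carrier_mat n n"
  unfolding Dm_def by (intro msum_carrier PYP_carrier)

lemma D_selfadj: assumes Y: "Y \<in> carrier_mat n n" and Z: "Z \<in> carrier_mat n n"
  shows "ip n (Dm n m P Y) Z = ip n Y (Dm n m P Z)"
proof -
  have t: "ip n (P l * Y * P l) Z = ip n Y (P l * Z * P l)" if l: "l < m" for l
  proof -
    have p: "P l \<in> carrier_mat n n" using Pc[OF l] .
    have "ip n (P l * Y * P l) Z = ip n (P l * Y) (Z * adj (P l))"
      by (rule ip_right_mult) (use p Y Z in simp_all)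
    also have "\<dots> = ip n (P l * Y) (Z * P l)" using Pa[OF l] by simp
    also have "\<dots> = ip n Y (adj (P l) * (Z * P l))"
      by (rule ip_left_mult) (use p Y Z in simp_all)
    also have "\<dots> = ip n Y (P l * Z * P l)" using Pa[OF l] assoc_sq[OF p Z p] by simp
    finally show ?thesis .
  qed
  have "ip n (Dm n m P Y) Z = (\<Sum>l<m. ip n (P l * Y * P l) Z)"
    unfolding Dm_def by (rule ip_msum_left) (use Y PYP_carrier in simp)
  also have "\<dots> = (\<Sum>l<m. ip n Y (P l * Z * P l))" using t by simp
  also have "\<dots> = ip n Y (Dm n m P Z)"
    unfolding Dm_def by (rule ip_msum_right[symmetric]) (use Z PYP_carrier in simp)
  finally show ?thesis .
qed

lemma D_idem: assumes Y: "Y \<in> carrier_mat n n"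
  shows "Dm n m P (Dm n m P Y) = Dm n m P Y"
proof -
  have t: "P j * Dm n m P Y * P j = P j * Y * P j" if j: "j < m" for j
  proof -
    have pj: "P j \<in> carrier_mat n n" using Pc[OF j] .
    have fc: "\<And>l. l < m \<Longrightarrow> P l * Y * P l \<in> carrier_mat n n" using Y PYP_carrier by simp
    have "P j * Dm n m P Y = msum n (\<lambda>l. P j * (P l * Y * P l)) m"
      unfolding Dm_def by (rule msum_mult_left[OF pj fc])
    then have "P j * Dm n m P Y * P j = msum n (\<lambda>l. P j * (P l * Y * P l)) m * P j" by simp
    also have "\<dots> = msum n (\<lambda>l. P j * (P l * Y * P l) * P j) m"
      by (rule msum_mult_right[OF pj]) (use fc pj in simp)
    also have "\<dots> = P j * (P j * Y * P j) * P j"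
    proof (rule msum_single[OF j])
      fix l assume l: "l < m" "l \<noteq> j"
      have pl: "P l \<in> carrier_mat n n" using Pc[OF l(1)] .
      have "P j * (P l * Y * P l) * P j = (P j * P l) * Y * P l * P j"
        using assoc4[OF pj pl Y pl] by simp
      also have "\<dots> = 0\<^sub>m n n" using Po[OF j l(1)] l(2) pl pj Y by simp
      finally show "P j * (P l * Y * P l) * P j = 0\<^sub>m n n" .
    qed (intro mult_sq_carrier pj Y)
    also have "\<dots> = P j * P j * Y * P j * P j"
      using assoc4[OF pj pj Y pj] by simp
    also have "\<dots> = P j * Y * (P j * P j)" using Pi[OF j] assoc_sq[of "P j * Y" n "P j" "P j"] pj Y by simp
    also have "\<dots> = P j * Y * P j" using Pi[OF j] by simp
    finally show ?thesis .
  qed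
  have "msum n (\<lambda>j. P j * Dm n m P Y * P j) m = msum n (\<lambda>j. P j * Y * P j) m"
    by (rule msum_cong) (rule t)
  then show ?thesis unfolding Dm_def[of n m P "Dm n m P Y"] by (simp add: Dm_def)
qed

lemma D_orth: assumes Y: "Y \<in> carrier_mat n n"
  shows "ip n (Dm n m P Y) (Y - Dm n m P Y) = 0"
proof -
  have DY: "Dm n m P Y \<in> carrier_mat n n" using D_carrier[OF Y] .
  have "ip n (Dm n m P Y) (Dm n m P Y) = ip n (Dm n m P (Dm n m P Y)) Y"
    using D_selfadj[OF DY Y] by simp
  also have "\<dots> = ip n (Dm n m P Y) Y" using D_idem[OF Y] by simp
  finally have e: "ip n (Dm n m P Y) (Dm n m P Y) = ip n (Dm n m P Y) Y" .
  show ?thesis using ip_minus_right[OF Y DY, of "Dm n m P Y"] e by simp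
qed

end

definition vm :: "nat \<Rightarrow> complex mat \<Rightarrow> complex vec" where
  "vm n X = vec (n*n) (\<lambda>r. X $$ (r div n, r mod n))"
definition unv :: "nat \<Rightarrow> complex vec \<Rightarrow> complex mat" where
  "unv n v = mat n n (\<lambda>(i,j). v $ (i*n+j))"

lemma idx_lt: "a < n \<Longrightarrow> b < (n::nat) \<Longrightarrow> a*n+b < n*n"
proof -
  assume "a < n" "b < n"
  then have "a*n + b < a*n + n" by simp
  also have "\<dots> = (a+1)*n" by simp
  also have "\<dots> \<le> n*n" using \<open>a < n\<close> by (intro mult_right_mono) auto
  finally show ?thesis .
qed

lemma idx_div: "b < (n::nat) \<Longrightarrow> (a*n+b) div n = a" by simp
lemma idx_mod: "b < (n::nat) \<Longrightarrow> (a*n+b) mod n = b" by simp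
lemma idx_div_lt: "c < n*(n::nat) \<Longrightarrow> c div n < n"
  by (simp add: less_mult_imp_div_less)
lemma idx_mod_lt: "c < n*(n::nat) \<Longrightarrow> c mod n < n"
  by (cases "n = 0") auto

lemma sum_nn: "(\<Sum>c<n*(n::nat). F c) = (\<Sum>a<n. \<Sum>b<n. F (a*n+b))"
proof -
  have "(\<Sum>c<n*n. F c) = (\<Sum>(a,b)\<in>{..<n}\<times>{..<n}. F (a*n+b))"
    by (rule sum.reindex_bij_witness[where j = "\<lambda>c. (c div n, c mod n)" and i = "\<lambda>(a,b). a*n+b"])
       (auto simp: idx_lt idx_div_lt idx_mod_lt)
  also have "\<dots> = (\<Sum>a<n. \<Sum>b<n. F (a*n+b))"
    by (simp add: sum.cartesian_product)
  finally show ?thesis .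
qed

lemma vm_carrier[simp]: "vm n X \<in> carrier_vec (n*n)" unfolding vm_def by simp
lemma unv_carrier[simp]: "unv n v \<in> carrier_mat n n" unfolding unv_def by simp
lemma unv_index[simp]: "a < n \<Longrightarrow> b < n \<Longrightarrow> unv n v $$ (a,b) = v $ (a*n+b)" unfolding unv_def by simp

lemma vm_unv: "v \<in> carrier_vec (n*n) \<Longrightarrow> vm n (unv n v) = v"
  unfolding vm_def by (intro eq_vecI) (auto simp: idx_div_lt idx_mod_lt)

lemma vm_inj: "X \<in> carrier_mat n n \<Longrightarrow> Y \<in> carrier_mat n n \<Longrightarrow> vm n X = vm n Y \<Longrightarrow> X = Y"
proof (intro eq_matI)
  fix i j assume X: "X \<in> carrier_mat n n" and Y: "Y \<in> carrier_mat n n" and e: "vm n X = vm n Y"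
    and ij: "i < dim_row Y" "j < dim_col Y"
  then have ij': "i < n" "j < n" by auto
  have "vm n X $ (i*n+j) = vm n Y $ (i*n+j)" using e by simp
  then show "X $$ (i,j) = Y $$ (i,j)" using ij' idx_lt[OF ij'] unfolding vm_def by simp
qed auto

lemma vn_vm: "vn (n*n) (vm n X) = hs n X"
  unfolding vn_def hs_def vm_def by (simp add: sum_nn idx_lt)

lemma delta_sum: "a < (n::nat) \<Longrightarrow> b < n \<Longrightarrow>
  (\<Sum>a'<n. \<Sum>b'<n. (if a' = a \<and> b' = b then 1 else 0) * h a' b') = (h a b :: complex)"
proof -
  assume ab: "a < n" "b < n"
  have "(\<Sum>a'<n. \<Sum>b'<n. (if a' = a \<and> b' = b then 1 else 0) * h a' b') = (\<Sum>a'<n. if a' = a then h a' b else 0)"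
  proof (intro sum.cong refl)
    fix a' assume "a' \<in> {..<n}"
    have "(\<Sum>b'<n. (if a' = a \<and> b' = b then 1 else 0) * h a' b') = (\<Sum>b'<n. if a' = a \<and> b' = b then h a' b' else 0)"
      by (intro sum.cong refl) simp
    also have "\<dots> = (if a' = a then h a' b else 0)"
      using ab by (cases "a' = a") (simp_all add: sum.delta)
    finally show "(\<Sum>b'<n. (if a' = a \<and> b' = b then 1 else 0) * h a' b') = (if a' = a then h a' b else 0)" .
  qed
  also have "\<dots> = h a b" using ab by simp
  finally show ?thesis .
qed

lemma bridge:
  assumes f: "\<And>X. X \<in> carrier_mat n n \<Longrightarrow> f X \<in> carrier_mat n n"
    and fe: "\<And>X i j. X \<in> carrier_mat n n \<Longrightarrow> i < n \<Longrightarrow> j < n \<Longrightarrow> f X $$ (i,j) = (\<Sum>a<n. \<Sum>b<n. X $$ (a,b) * g i j a b)"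
    and v: "v \<in> carrier_vec (n*n)"
  shows "op_matrix n f *\<^sub>v v = vm n (f (unv n v))"
proof (rule eq_vecI)
  show "dim_vec (op_matrix n f *\<^sub>v v) = dim_vec (vm n (f (unv n v)))" unfolding op_matrix_def vm_def by simp
  fix r assume "r < dim_vec (vm n (f (unv n v)))"
  then have r: "r < n*n" unfolding vm_def by simp
  define i where "i = r div n"
  define j where "j = r mod n"
  have ij: "i < n" "j < n" using r idx_div_lt idx_mod_lt i_def j_def by auto
  have Eab: "f (mat_unit n a b) $$ (i,j) = g i j a b" if "a < n" "b < n" for a b
  proof -
    have "mat_unit n a b \<in> carrier_mat n n" unfolding mat_unit_def by simp
    then have "f (mat_unit n a b) $$ (i,j) = (\<Sum>a'<n. \<Sum>b'<n. mat_unit n a b $$ (a',b') * g i j a' b')"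
      using fe ij by blast
    also have "\<dots> = (\<Sum>a'<n. \<Sum>b'<n. (if a' = a \<and> b' = b then 1 else 0) * g i j a' b')"
      unfolding mat_unit_def by (intro sum.cong refl) auto
    also have "\<dots> = g i j a b" using delta_sum that by blast
    finally show ?thesis .
  qed
  have "(op_matrix n f *\<^sub>v v) $ r = (\<Sum>c<n*n. f (mat_unit n (c div n) (c mod n)) $$ (i,j) * v $ c)"
    using r v unfolding op_matrix_def i_def j_def
    by (simp add: scalar_prod_def row_def atLeast0LessThan mult.commute)
  also have "\<dots> = (\<Sum>a<n. \<Sum>b<n. f (mat_unit n a b) $$ (i,j) * v $ (a*n+b))"
    by (simp add: sum_nn)
  also have "\<dots> = (\<Sum>a<n. \<Sum>b<n. v $ (a*n+b) * g i j a b)"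
    by (intro sum.cong refl) (simp add: Eab mult.commute)
  also have "\<dots> = f (unv n v) $$ (i,j)"
    using fe[of "unv n v" i j] ij by simp
  also have "\<dots> = vm n (f (unv n v)) $ r" unfolding vm_def i_def j_def using r by simp
  finally show "(op_matrix n f *\<^sub>v v) $ r = vm n (f (unv n v)) $ r" .
qed


lemma triple: assumes A: "A \<in> carrier_mat n n" and X: "X \<in> carrier_mat n n" and B: "B \<in> carrier_mat n n"
  and ij: "i < n" "j < n"
  shows "(A * X * adj B) $$ (i,j) = (\<Sum>a<n. \<Sum>b<n. X $$ (a,b) * (A $$ (i,a) * cnj (B $$ (j,b))))"
proof -
  have "(A * X * adj B) $$ (i,j) = (\<Sum>b<n. (\<Sum>a<n. A $$ (i,a) * X $$ (a,b)) * cnj (B $$ (j,b)))"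
    using A X B ij by (simp add: scalar_prod_def row_def col_def atLeast0LessThan)
  also have "\<dots> = (\<Sum>b<n. \<Sum>a<n. X $$ (a,b) * (A $$ (i,a) * cnj (B $$ (j,b))))"
    by (intro sum.cong refl) (simp only: sum_distrib_right, simp add: ac_simps)
  also have "\<dots> = (\<Sum>a<n. \<Sum>b<n. X $$ (a,b) * (A $$ (i,a) * cnj (B $$ (j,b))))"
    by (rule sum.swap)
  finally show ?thesis .
qed

lemma aux1: "(x::complex) * (a*c0 + b*(\<Sum>l\<in>L. c l)) = a*(x*c0) + b*(\<Sum>l\<in>L. x * c l)"
  by (simp add: sum_distrib_left[symmetric] algebra_simps)
lemma aux2: "(a::complex) * (\<Sum>i\<in>I. \<Sum>j\<in>J. f i j) + b * (\<Sum>i\<in>I. \<Sum>j\<in>J. g i j) = (\<Sum>i\<in>I. \<Sum>j\<in>J. a * f i j + b * g i j)"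
  by (simp add: sum.distrib sum_distrib_left)

lemma sum3_rot: "(\<Sum>l\<in>L. \<Sum>a\<in>A. \<Sum>b\<in>B. g l a b) = (\<Sum>a\<in>A. \<Sum>b\<in>B. \<Sum>l\<in>L. (g l a b :: 'a::comm_monoid_add))"
proof -
  have "(\<Sum>l\<in>L. \<Sum>a\<in>A. \<Sum>b\<in>B. g l a b) = (\<Sum>a\<in>A. \<Sum>l\<in>L. \<Sum>b\<in>B. g l a b)" by (rule sum.swap)
  also have "\<dots> = (\<Sum>a\<in>A. \<Sum>b\<in>B. \<Sum>l\<in>L. g l a b)" by (rule sum.cong[OF refl], rule sum.swap)
  finally show ?thesis .
qed

locale setting = pres +
  fixes U :: "real \<Rightarrow> complex mat" and k p :: real
  assumes unit: "\<forall>k. unitary_op n (U k)"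
    and p0: "0 < p" and p1: "p \<le> 1"
begin

abbreviation "V \<equiv> U k"
lemma Vc: "V \<in> carrier_mat n n" using unit unfolding unitary_op_def by auto
lemma Vu: "adj V * V = 1\<^sub>m n" using unit unfolding unitary_op_def by auto

lemma PVc: "l < m \<Longrightarrow> P l * V \<in> carrier_mat n n" using Pc Vc by (intro mult_sq_carrier)

lemma L_carrier: "X \<in> carrier_mat n n \<Longrightarrow> Lmap n m P U k k q X \<in> carrier_mat n n"
proof -
  assume X: "X \<in> carrier_mat n n"
  have c1: "V * X * adj V \<in> carrier_mat n n" using Vc X by (auto intro!: mult_sq_carrier)
  have c2: "msum n (\<lambda>l. P l * V * X * adj (P l * V)) m \<in> carrier_mat n n"
    using X by (auto intro!: msum_carrier mult_sq_carrier adj_carrier Pc Vc)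
  show ?thesis unfolding Lmap_def using c1 c2 by simp
qed

lemma L_entry: assumes X: "X \<in> carrier_mat n n" and ij: "i < n" "j < n"
  shows "Lmap n m P U k k q X $$ (i,j) = (\<Sum>a<n. \<Sum>b<n. X $$ (a,b) *
     (complex_of_real (1-q) * (V $$ (i,a) * cnj (V $$ (j,b))) +
      complex_of_real q * (\<Sum>l<m. (P l * V) $$ (i,a) * cnj ((P l * V) $$ (j,b)))))"
proof -
  have c1: "V * X * adj V \<in> carrier_mat n n" using Vc X by (intro mult_sq_carrier) auto
  have fc: "\<And>l. l < m \<Longrightarrow> P l * V * X * adj (P l * V) \<in> carrier_mat n n"
    using X by (auto intro!: mult_sq_carrier adj_carrier Pc Vc)
  have c2: "msum n (\<lambda>l. P l * V * X * adj (P l * V)) m \<in> carrier_mat n n" using fc by auto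
  have "Lmap n m P U k k q X $$ (i,j) = complex_of_real (1-q) * (V * X * adj V) $$ (i,j)
     + complex_of_real q * msum n (\<lambda>l. P l * V * X * adj (P l * V)) m $$ (i,j)"
    unfolding Lmap_def using c1 c2 ij Vc by simp
  also have "\<dots> = complex_of_real (1-q) * (\<Sum>a<n. \<Sum>b<n. X $$ (a,b) * (V $$ (i,a) * cnj (V $$ (j,b))))
     + complex_of_real q * (\<Sum>l<m. \<Sum>a<n. \<Sum>b<n. X $$ (a,b) * ((P l * V) $$ (i,a) * cnj ((P l * V) $$ (j,b))))"
  proof -
    have e3: "(\<Sum>l<m. (P l * V * X * adj (P l * V)) $$ (i,j)) =
      (\<Sum>l<m. \<Sum>a<n. \<Sum>b<n. X $$ (a,b) * ((P l * V) $$ (i,a) * cnj ((P l * V) $$ (j,b))))"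
      by (intro sum.cong refl) (rule triple[OF PVc X PVc ij], simp_all)
    have e2: "msum n (\<lambda>l. P l * V * X * adj (P l * V)) m $$ (i,j) = (\<Sum>l<m. (P l * V * X * adj (P l * V)) $$ (i,j))"
      by (rule msum_index[OF fc ij])
    show ?thesis unfolding triple[OF Vc X Vc ij] e2 e3 ..
  qed
  also have "\<dots> = complex_of_real (1-q) * (\<Sum>a<n. \<Sum>b<n. X $$ (a,b) * (V $$ (i,a) * cnj (V $$ (j,b))))
     + complex_of_real q * (\<Sum>a<n. \<Sum>b<n. \<Sum>l<m. X $$ (a,b) * ((P l * V) $$ (i,a) * cnj ((P l * V) $$ (j,b))))"
    by (subst sum3_rot) (rule refl)
  also have "\<dots> = (\<Sum>a<n. \<Sum>b<n. complex_of_real (1-q) * (X $$ (a,b) * (V $$ (i,a) * cnj (V $$ (j,b))))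
     + complex_of_real q * (\<Sum>l<m. X $$ (a,b) * ((P l * V) $$ (i,a) * cnj ((P l * V) $$ (j,b)))))"
    by (rule aux2)
  also have "\<dots> = (\<Sum>a<n. \<Sum>b<n. X $$ (a,b) *
     (complex_of_real (1-q) * (V $$ (i,a) * cnj (V $$ (j,b))) +
      complex_of_real q * (\<Sum>l<m. (P l * V) $$ (i,a) * cnj ((P l * V) $$ (j,b)))))"
    by (intro sum.cong refl) (rule aux1[symmetric])
  finally show ?thesis .
qed

end

lemma comb1: assumes Y: "Y \<in> carrier_mat n n" and W: "W \<in> carrier_mat n n" and ab: "a + b = (1::complex)"
  shows "a \<cdot>\<^sub>m Y + b \<cdot>\<^sub>m W = W + a \<cdot>\<^sub>m (Y - W)"
proof (rule eq_matI)
  fix i j assume "i < dim_row (W + a \<cdot>\<^sub>m (Y - W))" "j < dim_col (W + a \<cdot>\<^sub>m (Y - W))"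
  then have ij: "i < n" "j < n" using W by auto
  have bb: "b = 1 - a" using ab by (simp add: algebra_simps)
  show "(a \<cdot>\<^sub>m Y + b \<cdot>\<^sub>m W) $$ (i,j) = (W + a \<cdot>\<^sub>m (Y - W)) $$ (i,j)"
    using ij Y W unfolding bb by (simp add: algebra_simps)
qed (use Y W in auto)
lemma comb2: assumes Y: "(Y::complex mat) \<in> carrier_mat n n" and W: "W \<in> carrier_mat n n"
  shows "Y = W + 1 \<cdot>\<^sub>m (Y - W)"
  by (rule eq_matI) (use Y W in auto)
lemma comb3: assumes W: "W \<in> carrier_mat n n"
  shows "W + (c::complex) \<cdot>\<^sub>m 0\<^sub>m n n = W"
  by (rule eq_matI) (use W in auto)
lemma comb4: assumes Y: "(Y::complex mat) \<in> carrier_mat n n" and W: "W \<in> carrier_mat n n"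
  shows "complex_of_real (1-1) \<cdot>\<^sub>m Y + complex_of_real 1 \<cdot>\<^sub>m W = W"
  by (rule eq_matI) (use Y W in auto)

lemma cm_apply: assumes A: "(A :: complex mat) \<in> carrier_mat K K" and v: "v \<in> carrier_vec K"
  shows "char_matrix A e *\<^sub>v v = A *\<^sub>v v + (-e) \<cdot>\<^sub>v v"
  unfolding char_matrix_def
  by (rule eq_vecI, insert v A, auto simp: add_scalar_prod_distrib[of _ K])

lemma cm_ker: assumes A: "(A :: complex mat) \<in> carrier_mat K K" and v: "v \<in> carrier_vec K"
  shows "(char_matrix A 1 *\<^sub>v v = 0\<^sub>v K) = (A *\<^sub>v v = v)"
  unfolding cm_apply[OF A v] vec_eq_iff using A v by auto

context setting
begin

lemma t1: assumes X: "X \<in> carrier_mat n n" and l: "l < m" shows "P l * V * X * adj (P l * V) = P l * (V * X * adj V) * P l"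
  proof -
    have pl: "P l \<in> carrier_mat n n" using Pc[OF l] .
    have aV: "adj V \<in> carrier_mat n n" using Vc by (rule adj_carrier)
    have e: "adj (P l * V) = adj V * P l" unfolding adj_mult[OF pl Vc] Pa[OF l] ..
    have "P l * V * X * adj (P l * V) = P l * V * X * (adj V * P l)" unfolding e ..
    also have "\<dots> = P l * V * X * adj V * P l"
      by (rule assoc_sq[OF mult_sq_carrier[OF mult_sq_carrier[OF pl Vc] X] aV pl, symmetric])
    also have "\<dots> = P l * (V * X * adj V) * P l"
      by (subst assoc4[OF pl Vc X aV]) (rule refl)
    finally show ?thesis .
  qed

lemma LD: assumes X: "X \<in> carrier_mat n n"
  shows "Lmap n m P U k k q X = complex_of_real (1-q) \<cdot>\<^sub>m (V * X * adj V) + complex_of_real q \<cdot>\<^sub>m Dm n m P (V * X * adj V)"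
proof -
  have h: "msum n (\<lambda>l. P l * V * X * adj (P l * V)) m = msum n (\<lambda>l. P l * (V * X * adj V) * P l) m"
    by (rule msum_cong) (rule t1[OF X])
  have "Lmap n m P U k k q X = complex_of_real (1-q) \<cdot>\<^sub>m (V * X * adj V) + complex_of_real q \<cdot>\<^sub>m msum n (\<lambda>l. P l * (V * X * adj V) * P l) m"
    apply (unfold Lmap_def h)
    apply (rule refl)
    done
  then show ?thesis by (simp only: Dm_def)
qed

lemma Lmain: assumes X: "X \<in> carrier_mat n n"
  shows "hs n (Lmap n m P U k k p X) \<le> hs n X"
    and "hs n (Lmap n m P U k k p X) = hs n X \<Longrightarrow> Lmap n m P U k k p X = Lmap n m P U k k 1 X"
    and "Lmap n m P U k k 1 X = X \<Longrightarrow> Lmap n m P U k k p X = X"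
proof -
  define Y where "Y = V * X * adj V"
  define W where "W = Dm n m P Y"
  define Z where "Z = Y - W"
  have aV: "adj V \<in> carrier_mat n n" using Vc by (rule adj_carrier)
  have Yc: "Y \<in> carrier_mat n n" unfolding Y_def using Vc X aV by (auto intro!: mult_sq_carrier)
  have Wc: "W \<in> carrier_mat n n" unfolding W_def using D_carrier[OF Yc] .
  have Zc: "Z \<in> carrier_mat n n" unfolding Z_def by (rule minus_carrier_mat[OF Wc])
  have Lp: "Lmap n m P U k k p X = W + complex_of_real (1-p) \<cdot>\<^sub>m Z"
    unfolding LD[OF X] Y_def[symmetric] W_def[symmetric] Z_def
    by (rule comb1[OF Yc Wc]) simp
  have L1: "Lmap n m P U k k 1 X = W"
    unfolding LD[OF X] Y_def[symmetric] W_def[symmetric]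
    by (rule comb4[OF Yc Wc])
  have o: "ip n W Z = 0" unfolding W_def Z_def by (rule D_orth[OF Yc])
  have hsp: "hs n (Lmap n m P U k k p X) = hs n W + (1-p)^2 * hs n Z"
  proof -
    have "cmod (complex_of_real (1-p)) = 1 - p" using p1 by (simp only: norm_of_real abs_of_nonneg diff_ge_0_iff_ge)
    then show ?thesis unfolding Lp hs_pyth[OF Wc Zc o] by simp
  qed
  have YWZ: "Y = W + 1 \<cdot>\<^sub>m Z"
    unfolding Z_def by (rule comb2[OF Yc Wc])
  have hsX: "hs n X = hs n W + hs n Z"
  proof -
    have "hs n X = hs n Y" unfolding Y_def by (rule hs_unitary[OF Vc Vu X, symmetric])
    also have "\<dots> = hs n W + hs n Z" unfolding YWZ hs_pyth[OF Wc Zc o] by simp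
    finally show ?thesis .
  qed
  have Z0: "hs n Z \<ge> 0" by (rule hs_nonneg)
  have qa: "(1-p)*(1-p) \<le> 1*(1-p)" by (rule mult_right_mono) (use p0 p1 in auto)
  have q1: "(1-p)^2 < 1"
  proof -
    obtain t where t: "t = (1-p)*(1-p)" by blast
    have "t \<le> 1 - p" using qa t by simp
    then have "t < 1" using p0 by linarith
    then show ?thesis using t by (simp add: power2_eq_square)
  qed
  show "hs n (Lmap n m P U k k p X) \<le> hs n X"
    unfolding hsp hsX using q1 Z0 mult_right_le_one_le[of "hs n Z" "(1-p)^2"] by (simp add: mult.commute)
  show "Lmap n m P U k k p X = Lmap n m P U k k 1 X" if e: "hs n (Lmap n m P U k k p X) = hs n X"
  proof -
    have "(1-p)^2 * hs n Z = hs n Z" using e unfolding hsp hsX by simp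
    then have "(1 - (1-p)^2) * hs n Z = 0" by (simp add: algebra_simps)
    then have "hs n Z = 0" using q1 by simp
    then have "Z = 0\<^sub>m n n" using hs_zero[OF Zc] by simp
    then show ?thesis unfolding Lp L1 using comb3[OF Wc] by simp
  qed
  show "Lmap n m P U k k p X = X" if e: "Lmap n m P U k k 1 X = X"
  proof -
    have WX: "W = X" using e L1 by simp
    then have "hs n Z = 0" using hsX by simp
    then have "Z = 0\<^sub>m n n" using hs_zero[OF Zc] by simp
    then have "Lmap n m P U k k p X = W" unfolding Lp using comb3[OF Wc] by simp
    then show ?thesis using WX by simp
  qed
qed

end

context setting
begin

abbreviation "MM q \<equiv> op_matrix n (Lmap n m P U k k q)"

lemma M_apply: assumes v: "v \<in> carrier_vec (n*n)"
  shows "MM q *\<^sub>v v = vm n (Lmap n m P U k k q (unv n v))"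
  by (rule bridge[where g = "\<lambda>i j a b. complex_of_real (1-q) * (V $$ (i,a) * cnj (V $$ (j,b))) +
      complex_of_real q * (\<Sum>l<m. (P l * V) $$ (i,a) * cnj ((P l * V) $$ (j,b)))", OF L_carrier L_entry v])

lemma vn_v: "v \<in> carrier_vec (n*n) \<Longrightarrow> vn (n*n) v = hs n (unv n v)"
  using vn_vm[of n "unv n v"] vm_unv[of v n] by simp

lemma TL_le: assumes v: "v \<in> carrier_vec (n*n)" shows "vn (n*n) (MM p *\<^sub>v v) \<le> vn (n*n) v"
  unfolding M_apply[OF v] vn_vm vn_v[OF v] by (rule Lmain(1)) simp

lemma TL_eq: assumes v: "v \<in> carrier_vec (n*n)" and e: "vn (n*n) (MM p *\<^sub>v v) = vn (n*n) v"
  shows "MM p *\<^sub>v v = MM 1 *\<^sub>v v"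
proof -
  have "hs n (Lmap n m P U k k p (unv n v)) = hs n (unv n v)"
    using e unfolding M_apply[OF v] vn_vm vn_v[OF v] .
  then have "Lmap n m P U k k p (unv n v) = Lmap n m P U k k 1 (unv n v)"
    by (rule Lmain(2)[rotated]) simp
  then show ?thesis unfolding M_apply[OF v] by simp
qed

lemma TL_fix: assumes v: "v \<in> carrier_vec (n*n)" and e: "MM 1 *\<^sub>v v = v"
  shows "MM p *\<^sub>v v = v"
proof -
  have "vm n (Lmap n m P U k k 1 (unv n v)) = vm n (unv n v)"
    using e unfolding M_apply[OF v] vm_unv[OF v] .
  then have "Lmap n m P U k k 1 (unv n v) = unv n v"
    by (rule vm_inj[OF L_carrier[OF unv_carrier] unv_carrier])
  then have "Lmap n m P U k k p (unv n v) = unv n v"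
    by (rule Lmain(3)[rotated]) simp
  then show ?thesis unfolding M_apply[OF v] using vm_unv[OF v] by simp
qed

end

theorem mainTheorem6:
  fixes n m :: nat and P :: "nat \<Rightarrow> complex mat" and U :: "real \<Rightarrow> complex mat"
    and k p :: real
  assumes "proj_resolution n m P"
    and "\<forall>k. unitary_op n (U k)"
    and "eigenvalue_condition (op_matrix n (Lmap n m P U k k 1))"
    and "0 < p" and "p \<le> 1"
  shows "eigenvalue_condition (op_matrix n (Lmap n m P U k k p))"
proof -
  interpret setting n m P U k p by unfold_locales (use assms in auto)
  define K where "K = n*n"
  define M where "M = op_matrix n (Lmap n m P U k k p)"
  define N where "N = op_matrix n (Lmap n m P U k k 1)"
  have Mc: "M \<in> carrier_mat K K" unfolding M_def K_def op_matrix_def by simp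
  have Nc: "N \<in> carrier_mat K K" unfolding N_def K_def op_matrix_def by simp
  have Nev: "eigenvalue N 1" "Polynomial.order 1 (char_poly N) = 1"
    "\<And>e. eigenvalue N e \<Longrightarrow> e \<noteq> 1 \<Longrightarrow> cmod e < 1"
    using assms(3) unfolding eigenvalue_condition_def N_def by auto
  have contr: "\<forall>u\<in>carrier_vec K. vn K (M *\<^sub>v u) \<le> vn K u"
    unfolding M_def K_def using TL_le by blast
  have kerM: "mat_kernel (char_matrix M 1) = {v. v \<in> carrier_vec K \<and> M *\<^sub>v v = v}"
    using cm_ker[OF Mc] mat_kernel[OF char_matrix_closed[OF Mc]] by auto
  have kerN: "mat_kernel (char_matrix N 1) = {v. v \<in> carrier_vec K \<and> N *\<^sub>v v = v}"
    using cm_ker[OF Nc] mat_kernel[OF char_matrix_closed[OF Nc]] by auto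
  have fixeq: "v \<in> carrier_vec K \<Longrightarrow> (M *\<^sub>v v = v) = (N *\<^sub>v v = v)" for v
  proof
    assume v: "v \<in> carrier_vec K" and Mv: "M *\<^sub>v v = v"
    have "vn K (M *\<^sub>v v) = vn K v" using Mv by simp
    then have "M *\<^sub>v v = N *\<^sub>v v" using TL_eq v unfolding M_def N_def K_def by blast
    then show "N *\<^sub>v v = v" using Mv by simp
  next
    assume v: "v \<in> carrier_vec K" and Nv: "N *\<^sub>v v = v"
    show "M *\<^sub>v v = v" using TL_fix v Nv unfolding M_def N_def K_def by blast
  qed
  have ker: "mat_kernel (char_matrix M 1) = mat_kernel (char_matrix N 1)"
    unfolding kerM kerN using fixeq by auto
  have ss: "\<forall>v \<in> carrier_vec K. char_matrix M 1 *\<^sub>v (char_matrix M 1 *\<^sub>v v) = 0\<^sub>v K \<longrightarrow> char_matrix M 1 *\<^sub>v v = 0\<^sub>v K"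
  proof (intro ballI impI)
    fix v assume v: "v \<in> carrier_vec K" and h: "char_matrix M 1 *\<^sub>v (char_matrix M 1 *\<^sub>v v) = 0\<^sub>v K"
    define w where "w = char_matrix M 1 *\<^sub>v v"
    have w: "w \<in> carrier_vec K" unfolding w_def by (rule mult_mat_vec_carrier[OF char_matrix_closed[OF Mc] v])
    have Mw: "M *\<^sub>v w = w" using cm_ker[OF Mc w] h w_def by simp
    have Mv: "M *\<^sub>v v = v + w"
      unfolding w_def cm_apply[OF Mc v] by (rule eq_vecI) (use Mc v in auto)
    have "w = 0\<^sub>v K" by (rule contr_fix[OF Mc contr v w Mw Mv])
    then show "char_matrix M 1 *\<^sub>v v = 0\<^sub>v K" unfolding w_def .
  qed
  have ord: "Polynomial.order 1 (char_poly M) = 1"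
    by (rule order_one_crit[OF Mc Nc ker Nev(2) ss])
  have ev1: "eigenvalue M 1"
  proof -
    obtain v where "eigenvector N v 1" using Nev(1) unfolding eigenvalue_def by blast
    then have v: "v \<in> carrier_vec K" "v \<noteq> 0\<^sub>v K" "N *\<^sub>v v = v" using Nc unfolding eigenvector_def by auto
    then have "M *\<^sub>v v = v" using fixeq by blast
    then have "eigenvector M v 1" using v Mc unfolding eigenvector_def by auto
    then show ?thesis unfolding eigenvalue_def by blast
  qed
  have others: "cmod e < 1" if ev: "eigenvalue M e" and e1: "e \<noteq> 1" for e
  proof -
    obtain v where ev: "eigenvector M v e" using ev unfolding eigenvalue_def by blast
    then have v: "v \<in> carrier_vec K" "v \<noteq> 0\<^sub>v K" "M *\<^sub>v v = e \<cdot>\<^sub>v v" using Mc unfolding eigenvector_def by auto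
    have le: "cmod e \<le> 1" by (rule contr_eig[OF Mc contr ev])
    show ?thesis
    proof (rule ccontr)
      assume "\<not> cmod e < 1"
      then have c1: "cmod e = 1" using le by simp
      have "vn K (M *\<^sub>v v) = vn K v" unfolding v(3) vn_smult[OF v(1)] c1 by simp
      then have "M *\<^sub>v v = N *\<^sub>v v" using TL_eq v(1) unfolding M_def N_def K_def by blast
      then have "eigenvector N v e" using v Nc unfolding eigenvector_def by auto
      then have "eigenvalue N e" unfolding eigenvalue_def by blast
      then have "cmod e < 1" using Nev(3) e1 by blast
      then show False using c1 by simp
    qed
  qed
  show ?thesis unfolding eigenvalue_condition_def M_def[symmetric] using ev1 ord others by blast
qed


end
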